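(* Let $R$ be a commutative ring with unit and let $S'\subset S\subset \mathbb{N}=\{1,2,\ldots\}$. Suppose that for each $n\in S$ there is a finite sequence $n'=n_0\Leftrightarrow_R n_1\Leftrightarrow_R\cdots\Leftrightarrow_R n_r=n$ ($r\ge 0$) of elements of $S$ with $n'\in S'$. Then the homomorphism $\rho^R_{S,S'}\colon R[q]^S\to R[q]^{S'}$ is injective. In particular, if $S\subset\mathbb{N}$ is $\Leftrightarrow_R$-connected, then for any nonempty subset $S'\subset S$ the homomorphism $\rho^R_{S,S'}$ is injective. More particularly, for any nonempty subset $S'\subset\mathbb{N}$ the homomorphism $\rho^{\mathbb{Z}}_{\mathbb{N},S'}\colon \mathbb{Z}[q]^{\mathbb{N}}\to\mathbb{Z}[q]^{S'}$ is injective.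
   Context: All rings are commutative with unit; $q$ is an indeterminate. For $n\in\mathbb{N}$, $\Phi_n(q)\in\mathbb{Z}[q]$ is the $n$th cyclotomic polynomial. For $S\subset\mathbb{N}$, let $\Phi_S^*$ be the multiplicative subset of $\mathbb{Z}[q]$ generated by $\{\Phi_n(q): n\in S\}$, viewed as a directed set under divisibility, and define the cyclotomic completion $R[q]^S=\varprojlim_{f\in\Phi_S^*}R[q]/(f)$. For $S'\subset S$, $\rho^R_{S,S'}\colon R[q]^S\to R[q]^{S'}$ is the homomorphism induced by the identity of $R[q]$. A ring $R$ is $p$-adically separated if $\bigcap_{j\ge0}p^jR=(0)$. For $n,n'\in\mathbb{N}$ write $n\Leftrightarrow_R n'$ if either $n=n'$, or $n/n'$ is an integer power (positive or negative exponent) of a prime $p$ such that $R$ is $p$-adically separated, or $R=\{0\}$. A subset $S\subset\mathbb{N}$ is $\Leftrightarrow_R$-connected if it is nonempty and any two of its elements are joined by a finite chain of elements of $S$ consecutive ones of which are related by $\Leftrightarrow_R$. *)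

theory Defs
  imports Complex_Main "HOL-Computational_Algebra.Polynomial" "HOL-Library.Multiset"
begin

definition cyclotomic :: "nat \<Rightarrow> int poly" where
  "cyclotomic n = (THE p. (map_poly of_int p :: complex poly) =
      (\<Prod>k\<in>{k. k < n \<and> coprime k n}. [:- cis (2 * pi * real k / real n), 1:]))"

definition Phi_star :: "nat set \<Rightarrow> int poly set" where
  "Phi_star S = {prod_mset (image_mset cyclotomic M) | M. set_mset M \<subseteq> S}"

abbreviation to_R :: "int poly \<Rightarrow> 'a::comm_ring_1 poly" where
  "to_R f \<equiv> map_poly of_int f"

(* compatible families (a_f)_{f in Phi_S^*}, a_f in R[q] representing a class in R[q]/(f) *)
definition compatible :: "nat set \<Rightarrow> (int poly \<Rightarrow> 'a::comm_ring_1 poly) \<Rightarrow> bool" where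
  "compatible S a \<longleftrightarrow> (\<forall>f\<in>Phi_star S. \<forall>g\<in>Phi_star S. f dvd g \<longrightarrow> to_R f dvd (a g - a f))"

definition same_elt :: "nat set \<Rightarrow> (int poly \<Rightarrow> 'a::comm_ring_1 poly) \<Rightarrow> (int poly \<Rightarrow> 'a poly) \<Rightarrow> bool" where
  "same_elt S a b \<longleftrightarrow> (\<forall>f\<in>Phi_star S. to_R f dvd (a f - b f))"

(* the cyclotomic completion R[q]^S = lim_{f in Phi_S^*} R[q]/(f), as the set of
   compatible families modulo componentwise congruence *)
definition cyc_compl :: "nat set \<Rightarrow> (int poly \<Rightarrow> 'a::comm_ring_1 poly) set set" where
  "cyc_compl S = {{b. compatible S b \<and> same_elt S a b} | a. compatible S a}"

(* rho_{S,S'} : induced by the identity of R[q] (restriction of families) *)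
definition rho :: "nat set \<Rightarrow> nat set \<Rightarrow> (int poly \<Rightarrow> 'a::comm_ring_1 poly) set
                   \<Rightarrow> (int poly \<Rightarrow> 'a poly) set" where
  "rho S S' X = {b. compatible S' b \<and> (\<exists>a\<in>X. same_elt S' a b)}"

definition p_adically_separated :: "'a::comm_ring_1 itself \<Rightarrow> nat \<Rightarrow> bool" where
  "p_adically_separated (_ :: 'a itself) p \<longleftrightarrow>
     (\<forall>x::'a. (\<forall>j. (of_nat p) ^ j dvd x) \<longrightarrow> x = 0)"

definition equiv_R :: "'a::comm_ring_1 itself \<Rightarrow> nat \<Rightarrow> nat \<Rightarrow> bool" where
  "equiv_R R n n' \<longleftrightarrow> n = n'
     \<or> (\<exists>p k. prime p \<and> p_adically_separated R p \<and> (n = n' * p ^ k \<or> n' = n * p ^ k))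
     \<or> (UNIV :: 'a set) = {0}"

definition chain_in :: "'a::comm_ring_1 itself \<Rightarrow> nat set \<Rightarrow> nat list \<Rightarrow> bool" where
  "chain_in R S xs \<longleftrightarrow> xs \<noteq> [] \<and> set xs \<subseteq> S \<and>
     (\<forall>i. Suc i < length xs \<longrightarrow> equiv_R R (xs ! i) (xs ! Suc i))"

definition connected_R :: "'a::comm_ring_1 itself \<Rightarrow> nat set \<Rightarrow> bool" where
  "connected_R R S \<longleftrightarrow> S \<noteq> {} \<and>
     (\<forall>n\<in>S. \<forall>m\<in>S. \<exists>xs. chain_in R S xs \<and> hd xs = n \<and> last xs = m)"

end

theory Submission
  imports Defs "HOL-Computational_Algebra.Computational_Algebra"
begin

lemma to_R_mult: "(to_R (f * g) :: 'a::comm_ring_1 poly) = to_R f * to_R g"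
  by (rule poly_eqI) (simp add: coeff_map_poly coeff_mult of_int_sum)

lemma to_R_add: "(to_R (f + g) :: 'a::comm_ring_1 poly) = to_R f + to_R g"
  by (rule poly_eqI) (simp add: coeff_map_poly)

lemma to_R_diff: "(to_R (f - g) :: 'a::comm_ring_1 poly) = to_R f - to_R g"
  by (rule poly_eqI) (simp add: coeff_map_poly)

lemma to_R_1: "(to_R 1 :: 'a::comm_ring_1 poly) = 1"
  by simp

lemma to_R_power: "(to_R (f ^ n) :: 'a::comm_ring_1 poly) = to_R f ^ n"
  by (induction n) (simp_all add: to_R_mult)

lemma to_R_prod: "(to_R (prod f A) :: 'a::comm_ring_1 poly) = (\<Prod>x\<in>A. to_R (f x))"
  by (induction A rule: infinite_finite_induct) (simp_all add: to_R_mult)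

lemma to_R_prod_mset: "(to_R (prod_mset M) :: 'a::comm_ring_1 poly) = prod_mset (image_mset to_R M)"
  by (induction M) (simp_all add: to_R_mult)

lemma to_R_smult: "(to_R (smult c f) :: 'a::comm_ring_1 poly) = smult (of_int c) (to_R f)"
  by (rule poly_eqI) (simp add: coeff_map_poly)

lemma to_R_const: "(to_R [:c:] :: 'a::comm_ring_1 poly) = [:of_int c:]"
  by (rule poly_eqI) (simp add: coeff_map_poly coeff_pCons split: nat.splits)

lemma to_R_pCons: "(to_R (pCons a f) :: 'a::comm_ring_1 poly) = pCons (of_int a) (to_R f)"
  by (rule poly_eqI) (simp add: coeff_map_poly coeff_pCons split: nat.splits)

lemma to_R_pcompose: "(to_R (pcompose f g) :: 'a::comm_ring_1 poly) = pcompose (to_R f) (to_R g)"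
  by (induction f) (simp_all add: pcompose_pCons to_R_pCons to_R_add to_R_mult to_R_const)

lemma to_R_monom: "(to_R (monom c n) :: 'a::comm_ring_1 poly) = monom (of_int c) n"
  by (simp add: map_poly_monom)

lemma to_R_lead:
  assumes "lead_coeff f = 1" "(1::'a::comm_ring_1) \<noteq> 0"
  shows "lead_coeff (to_R f :: 'a poly) = 1"
proof -
  have "coeff (to_R f :: 'a poly) (degree f) = 1" using assms by (simp add: coeff_map_poly)
  moreover have "degree (to_R f :: 'a poly) \<le> degree f" by (rule degree_le) (simp add: coeff_map_poly coeff_eq_0)
  ultimately have "degree (to_R f :: 'a poly) = degree f"
    using assms(2) by (metis le_degree order.antisym zero_neq_one)
  then show ?thesis using assms by (simp add: coeff_map_poly)
qed

lemma to_C_inj: "(to_R f :: complex poly) = to_R g \<Longrightarrow> f = g"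
  by (metis coeff_map_poly of_int_0 of_int_eq_iff poly_eqI)


lemma monic_divmod:
  fixes f g :: "'a::comm_ring_1 poly"
  assumes "lead_coeff g = 1" "g \<noteq> 0"
  shows "\<exists>q r. f = g * q + r \<and> (r = 0 \<or> degree r < degree g)"
proof -
  obtain q r where qr: "pseudo_divmod f g = (q, r)" by (cases "pseudo_divmod f g") auto
  from pseudo_divmod[OF assms(2) qr] assms(1) show ?thesis by auto
qed

lemma monic_mult_small:
  fixes g d :: "'a::comm_ring_1 poly"
  assumes "lead_coeff g = 1" "g * d = s" "s = 0 \<or> degree s < degree g"
  shows "d = 0"
proof (rule ccontr)
  assume d: "d \<noteq> 0"
  have "coeff (g * d) (degree g + degree d) = lead_coeff d"
    using assms(1) by (simp add: coeff_mult_degree_sum)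
  also have "\<dots> \<noteq> 0" using d by simp
  finally have ne: "coeff s (degree g + degree d) \<noteq> 0" using assms(2) by simp
  then have "s \<noteq> 0" by auto
  moreover have "degree g + degree d \<le> degree s" using ne le_degree by blast
  ultimately show False using assms(3) by linarith
qed

lemma monic_dvd_from_sep:
  fixes F h :: "'a::comm_ring_1 poly"
  assumes mon: "lead_coeff F = 1"
    and sep: "\<And>x::'a. (\<forall>j. c ^ j dvd x) \<Longrightarrow> x = 0"
    and H: "\<And>j. \<exists>u z. h = F * u + smult (c ^ j) z"
  shows "F dvd h"
proof (cases "F = 0")
  case True
  then have "(1::'a) = 0" using mon by simp
  then have "h = 0" by (metis mult_cancel_left2 mult_zero_right smult_1_left smult_0_left)
  then show ?thesis by simp
next
  case F0: False
  obtain q r where qr: "h = F * q + r" and r: "r = 0 \<or> degree r < degree F"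
    using monic_divmod[OF mon F0] by blast
  have "\<forall>j. c ^ j dvd coeff r i" for i
  proof
    fix j
    obtain u z where uz: "h = F * u + smult (c ^ j) z" using H by blast
    obtain q' r' where qr': "z = F * q' + r'" and r': "r' = 0 \<or> degree r' < degree F"
      using monic_divmod[OF mon F0] by blast
    have eq: "F * (q - u - smult (c ^ j) q') = smult (c ^ j) r' - r"
      using qr uz qr' by (simp add: algebra_simps smult_add_right)
    have "smult (c ^ j) r' - r = 0 \<or> degree (smult (c ^ j) r' - r) < degree F"
    proof (cases "smult (c ^ j) r' - r = 0")
      case False
      show ?thesis
      proof (cases "r' = 0")
        case True
        then have "r \<noteq> 0" using False by simp
        then show ?thesis using True r by simp
      next
        case r'0: False
        show ?thesis
        proof (cases "r = 0")
          case True
          then show ?thesis using r' r'0 degree_smult_le[of "c ^ j" r'] by simp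
        next
          case r0: False
          have "degree (smult (c ^ j) r' - r) \<le> max (degree (smult (c ^ j) r')) (degree r)"
            by (rule degree_diff_le_max)
          moreover have "degree (smult (c ^ j) r') \<le> degree r'" by (rule degree_smult_le)
          ultimately show ?thesis using r r0 r' r'0 by linarith
        qed
      qed
    qed simp
    from monic_mult_small[OF mon eq this] eq have "r = smult (c ^ j) r'" by simp
    then show "c ^ j dvd coeff r i" by simp
  qed
  then have "coeff r i = 0" for i using sep by blast
  then have "r = 0" by (simp add: poly_eqI)
  then show ?thesis using qr by simp
qed


definition prim :: "nat \<Rightarrow> complex set" where
  "prim n = {z. z ^ n = 1 \<and> (\<forall>j. z ^ j = 1 \<longrightarrow> n dvd j)}"

definition cpoly :: "nat \<Rightarrow> complex poly" where
  "cpoly n = (\<Prod>z\<in>prim n. [:-z, 1:])"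

lemma prim_pow_iff: "z \<in> prim d \<Longrightarrow> z ^ j = 1 \<longleftrightarrow> d dvd j"
  unfolding prim_def by (auto simp: power_mult elim!: dvdE)

lemma prim_unique: "z \<in> prim d \<Longrightarrow> z \<in> prim d' \<Longrightarrow> d = d'"
  unfolding prim_def by (auto intro: dvd_antisym)

lemma finite_prim: "d > 0 \<Longrightarrow> finite (prim d)"
  by (rule finite_subset[of _ "{z. z ^ d = 1}"]) (auto simp: prim_def intro: finite_roots_unity)

lemma order_exists:
  fixes z :: complex
  assumes "n > 0" "z ^ n = 1"
  shows "\<exists>d>0. d dvd n \<and> z \<in> prim d"
proof -
  define d where "d = (LEAST d. 0 < d \<and> z ^ d = 1)"
  have d: "0 < d \<and> z ^ d = 1" unfolding d_def by (rule LeastI[of _ n]) (use assms in auto)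
  have min: "d \<le> e" if "0 < e" "z ^ e = 1" for e unfolding d_def using that by (intro Least_le) simp
  have dv: "d dvd j" if "z ^ j = 1" for j
  proof -
    have "z ^ j = z ^ (d * (j div d) + j mod d)" by simp
    also have "\<dots> = (z ^ d) ^ (j div d) * z ^ (j mod d)" by (simp only: power_add power_mult)
    finally have "z ^ j = (z ^ d) ^ (j div d) * z ^ (j mod d)" .
    then have "z ^ (j mod d) = 1" using that d by simp
    moreover have "j mod d < d" using d by simp
    ultimately have "j mod d = 0" using min by (meson leD not_gr0)
    then show ?thesis by (simp add: mod_eq_0_iff_dvd)
  qed
  have "z \<in> prim d" using d dv by (auto simp: prim_def)
  then show ?thesis using d dv assms by blast
qed

lemma roots_split:
  assumes "n > 0"
  shows "{z::complex. z ^ n = 1} = (\<Union>d\<in>{d. d dvd n}. prim d)"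
proof
  show "{z. z ^ n = 1} \<subseteq> (\<Union>d\<in>{d. d dvd n}. prim d)"
    using order_exists[OF assms] by blast
  show "(\<Union>d\<in>{d. d dvd n}. prim d) \<subseteq> {z. z ^ n = 1}"
    using prim_pow_iff by blast
qed

lemma xn_factor:
  assumes "n > 0" "c \<noteq> 0"
  shows "monom 1 n - [:c:] = (\<Prod>z\<in>{z::complex. z ^ n = c}. [:-z, 1:])"
proof -
  let ?p = "monom 1 n - [:c:] :: complex poly"
  have pz: "poly ?p z = z ^ n - c" for z by (simp add: poly_monom)
  have "?p = [:-c:] + monom 1 n" by simp
  also have "lead_coeff \<dots> = 1"
    by (subst lead_coeff_add_le) (use assms in \<open>simp_all add: degree_monom_eq\<close>)
  finally have lc: "lead_coeff ?p = 1" .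
  have "rsquarefree ?p"
  proof (subst rsquarefree_roots, intro allI notI)
    fix a assume a: "poly ?p a = 0 \<and> poly (pderiv ?p) a = 0"
    have "pderiv ?p = monom (of_nat n) (n - 1)" by (simp add: pderiv_diff pderiv_monom)
    then have "of_nat n * a ^ (n - 1) = 0" using a by (simp add: poly_monom)
    then have "a = 0" using assms by simp
    then show False using a assms pz by (simp add: power_0_left)
  qed
  from complex_poly_decompose_rsquarefree[OF this] lc
  have "?p = (\<Prod>z | poly ?p z = 0. [:-z, 1:])" by simp
  also have "{z. poly ?p z = 0} = {z. z ^ n = c}" by (simp add: poly_monom)
  finally show ?thesis .
qed

lemma xn1_prod:
  assumes "n > 0"
  shows "monom 1 n - 1 = (\<Prod>d\<in>{d. d dvd n}. cpoly d)"
proof -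
  have "monom 1 n - 1 = (\<Prod>z\<in>{z::complex. z ^ n = 1}. [:-z, 1:])"
    using xn_factor[OF assms, of 1] by (simp add: one_pCons del: pCons_one)
  also have "\<dots> = (\<Prod>z\<in>(\<Union>d\<in>{d. d dvd n}. prim d). [:-z, 1:])"
    by (simp add: roots_split[OF assms])
  also have "\<dots> = (\<Prod>d\<in>{d. d dvd n}. cpoly d)"
    unfolding cpoly_def
  proof (rule prod.UNION_disjoint)
    show "finite {d. d dvd n}" by (rule finite_divisors_nat[OF assms])
    show "\<forall>d\<in>{d. d dvd n}. finite (prim d)" using assms
      by (metis dvd_pos_nat finite_prim mem_Collect_eq)
    show "\<forall>i\<in>{d. d dvd n}. \<forall>j\<in>{d. d dvd n}. i \<noteq> j \<longrightarrow> prim i \<inter> prim j = {}"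
      by (metis disjoint_iff prim_unique)
  qed
  finally show ?thesis .
qed

lemma cpoly_lead: "lead_coeff (cpoly n) = 1"
  unfolding cpoly_def lead_coeff_prod by simp


lemma coprime_iff_cancel:
  fixes k n :: nat
  assumes "n > 0"
  shows "coprime k n \<longleftrightarrow> (\<forall>j. n dvd k * j \<longrightarrow> n dvd j)"
proof
  assume "coprime k n"
  then have "coprime n k" by (simp add: coprime_commute)
  then show "\<forall>j. n dvd k * j \<longrightarrow> n dvd j" using coprime_dvd_mult_right_iff by blast
next
  assume H: "\<forall>j. n dvd k * j \<longrightarrow> n dvd j"
  define g where "g = gcd k n"
  have g0: "g > 0" using assms by (simp add: g_def)
  have "k * (n div g) = (k div g) * n"
    by (simp add: g_def div_mult_swap dvd_div_mult)
  then have "n dvd k * (n div g)" by simp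
  then have "n dvd n div g" using H by blast
  moreover have "n div g > 0" using assms g0 by (simp add: g_def div_greater_zero_iff)
  ultimately have "n \<le> n div g" by (simp add: dvd_imp_le)
  moreover have "1 < g \<Longrightarrow> n div g < n" using assms by (intro div_less_dividend)
  ultimately have "g \<le> 1" by linarith
  then have "g = 1" using g0 by simp
  then show "coprime k n" by (simp add: g_def coprime_iff_gcd_eq_1)
qed

lemma omega_facts:
  assumes n: "n > 0"
  defines "\<omega> \<equiv> cis (2 * pi / real n)"
  shows "\<And>k. cis (2 * pi * real k / real n) = \<omega> ^ k"
    and "\<And>m. \<omega> ^ m = 1 \<longleftrightarrow> n dvd m"
proof -
  show pk: "cis (2 * pi * real k / real n) = \<omega> ^ k" for k
    by (simp add: \<omega>_def DeMoivre mult_ac)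
  have bij: "bij_betw (\<lambda>k. cis (2 * pi * real k / real n)) {..<n} {z. z ^ n = 1}"
    by (rule bij_betw_roots_unity[OF n])
  then have inj: "inj_on (\<lambda>k. \<omega> ^ k) {..<n}" by (simp add: bij_betw_def pk)
  have wn: "\<omega> ^ n = 1" using bij pk[of 1] by (simp add: \<omega>_def DeMoivre)
  show "\<omega> ^ m = 1 \<longleftrightarrow> n dvd m" for m
  proof -
    have "\<omega> ^ m = (\<omega> ^ n) ^ (m div n) * \<omega> ^ (m mod n)"
    proof -
      have "\<omega> ^ m = \<omega> ^ (n * (m div n) + m mod n)" by simp
      also have "\<dots> = (\<omega> ^ n) ^ (m div n) * \<omega> ^ (m mod n)" by (simp only: power_add power_mult)
      finally show ?thesis .
    qed
    then have e: "\<omega> ^ m = \<omega> ^ (m mod n)" using wn by simp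
    have "\<omega> ^ (m mod n) = 1 \<longleftrightarrow> m mod n = 0"
    proof
      assume "\<omega> ^ (m mod n) = 1"
      then have "\<omega> ^ (m mod n) = \<omega> ^ 0" by simp
      with inj show "m mod n = 0" using n by (auto simp: inj_on_def)
    qed simp
    then show ?thesis using e by (simp add: mod_eq_0_iff_dvd)
  qed
qed

lemma cis_prod_eq_cpoly:
  assumes n: "n > 0"
  shows "(\<Prod>k\<in>{k. k < n \<and> coprime k n}. [:- cis (2 * pi * real k / real n), 1:]) = cpoly n"
proof -
  define \<omega> where "\<omega> = cis (2 * pi / real n)"
  note pk = omega_facts(1)[OF n, folded \<omega>_def]
  note wd = omega_facts(2)[OF n, folded \<omega>_def]
  have bij: "bij_betw (\<lambda>k. \<omega> ^ k) {..<n} {z. z ^ n = 1}"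
    using bij_betw_roots_unity[OF n] by (simp add: pk)
  have mem: "\<omega> ^ k \<in> prim n \<longleftrightarrow> coprime k n" for k
  proof -
    have "\<omega> ^ k \<in> prim n \<longleftrightarrow> (\<forall>j. n dvd k * j \<longrightarrow> n dvd j)"
      by (simp add: prim_def wd flip: power_mult)
    then show ?thesis using coprime_iff_cancel[OF n] by simp
  qed
  have "bij_betw (\<lambda>k. \<omega> ^ k) {k. k < n \<and> coprime k n} (prim n)"
    unfolding bij_betw_def
  proof
    show "inj_on (\<lambda>k. \<omega> ^ k) {k. k < n \<and> coprime k n}"
      using bij by (auto simp: bij_betw_def inj_on_def)
    show "(\<lambda>k. \<omega> ^ k) ` {k. k < n \<and> coprime k n} = prim n"
    proof
      show "(\<lambda>k. \<omega> ^ k) ` {k. k < n \<and> coprime k n} \<subseteq> prim n" using mem by auto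
      show "prim n \<subseteq> (\<lambda>k. \<omega> ^ k) ` {k. k < n \<and> coprime k n}"
      proof
        fix z assume z: "z \<in> prim n"
        then have "z \<in> {z. z ^ n = 1}" by (simp add: prim_def)
        then obtain k where k: "k < n" "z = \<omega> ^ k" using bij by (auto simp: bij_betw_def)
        then show "z \<in> (\<lambda>k. \<omega> ^ k) ` {k. k < n \<and> coprime k n}" using mem z by auto
      qed
    qed
  qed
  then have "(\<Prod>k\<in>{k. k < n \<and> coprime k n}. [:- (\<omega> ^ k), 1:]) = (\<Prod>z\<in>prim n. [:-z, 1:])"
    by (rule prod.reindex_bij_betw)
  then show ?thesis by (simp add: pk cpoly_def)
qed

lemma to_C_lead_degree:
  "lead_coeff (to_R f :: complex poly) = of_int (lead_coeff f) \<and> degree (to_R f :: complex poly) = degree f"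
proof -
  have d: "degree (to_R f :: complex poly) = degree f" by (rule degree_map_poly) simp
  then show ?thesis by (simp add: coeff_map_poly)
qed

lemma cpoly_integral: "n > 0 \<Longrightarrow> \<exists>P. (to_R P :: complex poly) = cpoly n"
proof (induction n rule: less_induct)
  case (less n)
  define D where "D = {d. d dvd n \<and> d < n}"
  have fin: "finite D" using less.prems by (auto simp: D_def)
  have Dpos: "d \<in> D \<Longrightarrow> d > 0" for d using less.prems by (auto simp: D_def intro: dvd_pos_nat)
  have "\<forall>d\<in>D. \<exists>P. (to_R P :: complex poly) = cpoly d"
    using less.IH Dpos by (auto simp: D_def)
  then obtain P where P: "\<And>d. d \<in> D \<Longrightarrow> (to_R (P d) :: complex poly) = cpoly d" by metis
  define Q where "Q = (\<Prod>d\<in>D. P d)"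
  have QC: "(to_R Q :: complex poly) = (\<Prod>d\<in>D. cpoly d)"
    unfolding Q_def to_R_prod by (rule prod.cong) (simp_all add: P)
  have "lead_coeff (to_R Q :: complex poly) = 1" unfolding QC by (simp add: lead_coeff_prod cpoly_lead)
  then have Qlc: "lead_coeff Q = 1" using to_C_lead_degree[of Q] by (metis of_int_eq_1_iff)
  then have Q0: "Q \<noteq> 0" by auto
  have split: "{d. d dvd n} = insert n D" using less.prems by (auto simp: D_def dvd_imp_le le_less)
  have "monom 1 n - 1 = cpoly n * (\<Prod>d\<in>D. cpoly d)"
    using xn1_prod[OF less.prems] by (simp add: split fin D_def)
  then have eq1: "monom 1 n - 1 = cpoly n * to_R Q" by (simp add: QC)
  obtain u r where ur: "monom 1 n - 1 = Q * u + r" and r: "r = 0 \<or> degree r < degree Q"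
    using monic_divmod[OF Qlc Q0] by blast
  have "(to_R (monom 1 n - 1) :: complex poly) = monom 1 n - 1"
    by (simp add: to_R_diff to_R_monom)
  then have "monom 1 n - 1 = to_R Q * to_R u + (to_R r :: complex poly)"
    by (simp add: ur to_R_add to_R_mult)
  with eq1 have eq2: "to_R Q * (cpoly n - to_R u) = (to_R r :: complex poly)"
    by (simp add: algebra_simps)
  have lcC: "lead_coeff (to_R Q :: complex poly) = 1" using Qlc to_C_lead_degree[of Q] by (metis of_int_1)
  have "to_R r = (0::complex poly) \<or> degree (to_R r :: complex poly) < degree (to_R Q :: complex poly)"
    using r to_C_lead_degree[of r] to_C_lead_degree[of Q] by auto
  from monic_mult_small[OF lcC eq2 this] show ?case by auto
qed

lemma cyclotomic_C: "n > 0 \<Longrightarrow> (to_R (cyclotomic n) :: complex poly) = cpoly n"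
proof -
  assume n: "n > 0"
  obtain P where P: "(to_R P :: complex poly) = cpoly n" using cpoly_integral[OF n] by blast
  have "cyclotomic n = P"
    unfolding cyclotomic_def
  proof (rule the_equality)
    show "(to_R P :: complex poly) = (\<Prod>k\<in>{k. k < n \<and> coprime k n}. [:- cis (2 * pi * real k / real n), 1:])"
      by (simp add: P cis_prod_eq_cpoly[OF n])
    show "\<And>p. (to_R p :: complex poly) = (\<Prod>k\<in>{k. k < n \<and> coprime k n}. [:- cis (2 * pi * real k / real n), 1:]) \<Longrightarrow> p = P"
      by (rule to_C_inj) (simp add: P cis_prod_eq_cpoly[OF n])
  qed
  then show ?thesis using P by simp
qed

lemma cyclotomic_lead: "n > 0 \<Longrightarrow> lead_coeff (cyclotomic n) = 1"
  using cyclotomic_C[of n] to_C_lead_degree[of "cyclotomic n"] cpoly_lead[of n] by (metis of_int_eq_1_iff)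


lemma pow_prim_set:
  assumes p: "prime p" and m: "m > 0"
  shows "p dvd m \<Longrightarrow> {x. x ^ p \<in> prim m} = prim (m * p)"
    and "\<not> p dvd m \<Longrightarrow> {x. x ^ p \<in> prim m} = prim (m * p) \<union> prim m"
proof -
  have p1: "p > 1" using p prime_gt_1_nat by blast
  have A: "x ^ p \<in> prim m" if "x \<in> prim (m * p)" for x
  proof -
    have "(x ^ p) ^ j = 1 \<longleftrightarrow> m dvd j" for j
    proof -
      have "(x ^ p) ^ j = x ^ (p * j)" by (simp only: power_mult)
      also have "\<dots> = 1 \<longleftrightarrow> m * p dvd p * j" by (rule prim_pow_iff[OF that])
      also have "\<dots> \<longleftrightarrow> m dvd j" using p1 by (simp add: mult.commute)
      finally show ?thesis .
    qed
    then show ?thesis by (simp add: prim_def)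
  qed
  have B: "x ^ p \<in> prim m" if "x \<in> prim m" "\<not> p dvd m" for x
  proof -
    have cop: "coprime m p" using prime_imp_coprime[OF p that(2)] by (simp add: coprime_commute)
    have "(x ^ p) ^ j = 1 \<longleftrightarrow> m dvd j" for j
    proof -
      have "(x ^ p) ^ j = x ^ (p * j)" by (simp only: power_mult)
      also have "\<dots> = 1 \<longleftrightarrow> m dvd p * j" by (rule prim_pow_iff[OF that(1)])
      also have "\<dots> \<longleftrightarrow> m dvd j" by (rule coprime_dvd_mult_right_iff[OF cop])
      finally show ?thesis .
    qed
    then show ?thesis by (simp add: prim_def)
  qed
  have C: "x \<in> prim (m * p) \<or> (x \<in> prim m \<and> \<not> p dvd m)" if x: "x ^ p \<in> prim m" for x
  proof -
    have "x ^ (p * m) = 1" using x by (simp add: prim_def power_mult)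
    then obtain d where d: "d > 0" "d dvd p * m" "x \<in> prim d"
      using order_exists[of "p * m" x] p1 m by auto
    have key: "d dvd p * j \<longleftrightarrow> m dvd j" for j
    proof -
      have "d dvd p * j \<longleftrightarrow> x ^ (p * j) = 1" by (rule prim_pow_iff[OF d(3), symmetric])
      also have "x ^ (p * j) = (x ^ p) ^ j" by (simp only: power_mult)
      also have "\<dots> = 1 \<longleftrightarrow> m dvd j" by (rule prim_pow_iff[OF x])
      finally show ?thesis .
    qed
    have "m dvd d" using key[of d] by simp
    then obtain t where t: "d = m * t" by (auto elim: dvdE)
    have "m * t dvd m * p" using d(2) t by (simp add: mult.commute)
    then have "t dvd p" using m by simp
    then have "t = 1 \<or> t = p" using p by (simp add: prime_nat_iff)
    then show ?thesis
    proof
      assume "t = p" then show ?thesis using d t by simp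
    next
      assume t1: "t = 1"
      have "\<not> p dvd m"
      proof
        assume "p dvd m"
        then obtain s where s: "m = p * s" by (auto elim: dvdE)
        have "d dvd p * s" using t t1 s by simp
        then have "m dvd s" using key by blast
        moreover have "s > 0" "s < m" using s m p1 by auto
        ultimately show False by (simp add: nat_dvd_not_less)
      qed
      then show ?thesis using d t t1 by simp
    qed
  qed
  show "p dvd m \<Longrightarrow> {x. x ^ p \<in> prim m} = prim (m * p)" using A C by blast
  show "\<not> p dvd m \<Longrightarrow> {x. x ^ p \<in> prim m} = prim (m * p) \<union> prim m" using A B C by blast
qed

lemma cpoly_compose:
  assumes p: "p > 0" and m: "m > 0"
  shows "pcompose (cpoly m) (monom 1 p) = (\<Prod>x\<in>{x. x ^ p \<in> prim m}. [:-x, 1:])"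
proof -
  have nz: "\<eta> \<noteq> 0" if "\<eta> \<in> prim m" for \<eta>
    using that m by (auto simp: prim_def power_0_left)
  have "pcompose (cpoly m) (monom 1 p) = (\<Prod>\<eta>\<in>prim m. monom 1 p - [:\<eta>:])"
    unfolding cpoly_def pcompose_prod
    by (rule prod.cong) (simp_all add: pcompose_pCons algebra_simps)
  also have "\<dots> = (\<Prod>\<eta>\<in>prim m. \<Prod>x\<in>{x. x ^ p = \<eta>}. [:-x, 1:])"
    by (rule prod.cong) (simp_all add: xn_factor[OF p] nz)
  also have "\<dots> = (\<Prod>x\<in>(\<Union>\<eta>\<in>prim m. {x. x ^ p = \<eta>}). [:-x, 1:])"
  proof (rule prod.UNION_disjoint[symmetric])
    show "finite (prim m)" by (rule finite_prim[OF m])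
    show "\<forall>\<eta>\<in>prim m. finite {x::complex. x ^ p = \<eta>}" using p by (auto intro: finite_nth_roots)
    show "\<forall>i\<in>prim m. \<forall>j\<in>prim m. i \<noteq> j \<longrightarrow> {x::complex. x ^ p = i} \<inter> {x. x ^ p = j} = {}"
      by blast
  qed
  also have "(\<Union>\<eta>\<in>prim m. {x. x ^ p = \<eta>}) = {x. x ^ p \<in> prim m}" by blast
  finally show ?thesis .
qed

lemma cyc_comp_dvd:
  assumes p: "prime p" and m: "m > 0" and pm: "p dvd m"
  shows "pcompose (cyclotomic m) (monom 1 p) = cyclotomic (m * p)"
proof (rule to_C_inj)
  have p0: "p > 0" using p prime_gt_0_nat by blast
  show "(to_R (pcompose (cyclotomic m) (monom 1 p)) :: complex poly) = to_R (cyclotomic (m * p))"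
    by (simp add: to_R_pcompose to_R_monom cyclotomic_C m p0 cpoly_compose pow_prim_set(1)[OF p m pm])
       (simp add: cpoly_def)
qed

lemma cyc_comp_ndvd:
  assumes p: "prime p" and m: "m > 0" and pm: "\<not> p dvd m"
  shows "pcompose (cyclotomic m) (monom 1 p) = cyclotomic (m * p) * cyclotomic m"
proof (rule to_C_inj)
  have p0: "p > 0" using p prime_gt_0_nat by blast
  have p1: "p > 1" using p prime_gt_1_nat by blast
  have disj: "prim (m * p) \<inter> prim m = {}"
    using prim_unique[of _ "m * p" m] m p1 by auto
  have "(\<Prod>x\<in>prim (m * p) \<union> prim m. [:-x, 1:]) = cpoly (m * p) * cpoly m"
    unfolding cpoly_def
    by (rule prod.union_disjoint) (use m p0 disj in \<open>simp_all add: finite_prim\<close>)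
  then show "(to_R (pcompose (cyclotomic m) (monom 1 p)) :: complex poly) = to_R (cyclotomic (m * p) * cyclotomic m)"
    by (simp add: to_R_pcompose to_R_monom to_R_mult cyclotomic_C m p0 cpoly_compose pow_prim_set(2)[OF p m pm])
qed


definition pm :: "nat \<Rightarrow> int poly \<Rightarrow> int poly \<Rightarrow> bool" where
  "pm p A B \<longleftrightarrow> [:int p:] dvd (A - B)"

lemma const_dvd_smult [simp]: "[:c:] dvd smult c (w :: 'a::comm_semiring_1 poly)"
  using dvd_triv_left[of "[:c:]" w] by simp

lemma pm_refl: "pm p A A" by (simp add: pm_def)
lemma pm_sym: "pm p A B \<Longrightarrow> pm p B A"
  unfolding pm_def by (metis dvd_minus_iff minus_diff_eq)
lemma pm_trans: "pm p A B \<Longrightarrow> pm p B C \<Longrightarrow> pm p A C"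
proof -
  assume "pm p A B" "pm p B C"
  then have "[:int p:] dvd (A - B) + (B - C)" unfolding pm_def by (rule dvd_add)
  then show ?thesis unfolding pm_def by simp
qed
lemma pm_add: "pm p A B \<Longrightarrow> pm p C D \<Longrightarrow> pm p (A + C) (B + D)"
proof -
  assume "pm p A B" "pm p C D"
  then have "[:int p:] dvd (A - B) + (C - D)" unfolding pm_def by (rule dvd_add)
  then show ?thesis unfolding pm_def by (simp add: algebra_simps)
qed
lemma pm_mult: "pm p A B \<Longrightarrow> pm p C D \<Longrightarrow> pm p (A * C) (B * D)"
proof -
  assume "pm p A B" "pm p C D"
  then have "[:int p:] dvd (A - B) * C + B * (C - D)" unfolding pm_def by simp
  then show ?thesis unfolding pm_def by (simp add: algebra_simps)
qed
lemma pm_power: "pm p A B \<Longrightarrow> pm p (A ^ n) (B ^ n)"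
  by (induction n) (simp_all add: pm_refl pm_mult)
lemma pm_smult: "pm p (A + smult (int p) w) A"
proof -
  have "[:int p:] dvd smult (int p) w" using dvd_triv_left[of "[:int p:]" w] by simp
  then show ?thesis unfolding pm_def by simp
qed

lemma freshman:
  fixes x y :: "'a::comm_ring_1"
  assumes p: "prime p"
  shows "\<exists>w. (x + y) ^ p = x ^ p + y ^ p + of_nat p * w"
proof -
  have p0: "p > 0" using p prime_gt_0_nat by blast
  have "(x + y) ^ p = (\<Sum>k\<le>p. of_nat (p choose k) * x ^ k * y ^ (p - k))"
    by (rule binomial_ring)
  also have "{..p} = insert 0 (insert p {1..<p})" using p0 by auto
  also have "(\<Sum>k\<in>insert 0 (insert p {1..<p}). of_nat (p choose k) * x ^ k * y ^ (p - k))
      = y ^ p + (x ^ p + (\<Sum>k\<in>{1..<p}. of_nat (p choose k) * x ^ k * y ^ (p - k)))"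
    using p0 by (simp add: sum.insert)
  also have "(\<Sum>k\<in>{1..<p}. of_nat (p choose k) * x ^ k * y ^ (p - k))
      = of_nat p * (\<Sum>k\<in>{1..<p}. of_nat ((p choose k) div p) * x ^ k * y ^ (p - k))"
    unfolding sum_distrib_left
  proof (rule sum.cong)
    fix k assume k: "k \<in> {1..<p}"
    have "p dvd (p choose k)" using k p0 p by (intro dvd_choose_prime) auto
    then have "of_nat (p choose k) = (of_nat p * of_nat ((p choose k) div p) :: 'a)"
      by (metis dvd_mult_div_cancel of_nat_mult)
    then show "of_nat (p choose k) * x ^ k * y ^ (p - k) =
        of_nat p * (of_nat ((p choose k) div p) * x ^ k * y ^ (p - k))" by (simp add: mult_ac)
  qed simp
  finally show ?thesis by (metis add.assoc add.commute)
qed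

lemma freshman_pm:
  assumes "prime p"
  shows "pm p ((x + y) ^ p) (x ^ p + y ^ p)"
proof -
  obtain w where w: "(x + y) ^ p = x ^ p + y ^ p + of_nat p * w" using freshman[OF assms] by blast
  have "of_nat p * w = [:int p:] * w" by (simp add: of_nat_poly)
  then show ?thesis unfolding pm_def w by simp
qed

lemma fermat_int:
  assumes p: "prime p"
  shows "int p dvd (a ^ p - a)"
proof (induction a rule: int_induct[where k = 0])
  case base
  have "p > 0" using p prime_gt_0_nat by blast
  then show ?case by (simp add: power_0_left)
next
  case (step1 i)
  obtain w where w: "(i + 1) ^ p = i ^ p + 1 ^ p + of_nat p * w" using freshman[OF p] by blast
  have e: "(i + 1) ^ p - (i + 1) = (i ^ p - i) + int p * w" using w by simp
  show ?case unfolding e by (rule dvd_add) (use step1 in auto)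
next
  case (step2 i)
  obtain w where w: "(i - 1 + 1) ^ p = (i - 1) ^ p + 1 ^ p + of_nat p * w" using freshman[OF p] by blast
  have e: "(i - 1) ^ p - (i - 1) = (i ^ p - i) - int p * w" using w by simp
  show ?case unfolding e by (rule dvd_diff) (use step2 in auto)
qed

lemma frobenius:
  assumes p: "prime p"
  shows "pm p (pcompose f (monom 1 p)) (f ^ p)"
proof (induction f)
  case 0
  have "p > 0" using p prime_gt_0_nat by blast
  then show ?case by (simp add: pm_refl power_0_left)
next
  case (pCons a f)
  have X: "pCons a f = [:a:] + [:0, 1:] * f" by simp
  have "pcompose (pCons a f) (monom 1 p) = [:a:] + monom 1 p * pcompose f (monom 1 p)"
    by (simp add: pcompose_pCons)
  moreover have "pm p ([:a:] + monom 1 p * pcompose f (monom 1 p)) ([:a ^ p:] + monom 1 p * f ^ p)"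
  proof (rule pm_add)
    have "int p dvd a ^ p - a" by (rule fermat_int[OF p])
    then have "int p dvd a - a ^ p" by (simp add: dvd_diff_commute)
    then have "[:int p:] dvd [:a - a ^ p:]" by simp
    moreover have "[:a:] - [:a ^ p:] = [:a - a ^ p:]" by simp
    ultimately show "pm p [:a:] [:a ^ p:]" unfolding pm_def by simp
    show "pm p (monom 1 p * pcompose f (monom 1 p)) (monom 1 p * f ^ p)"
      by (rule pm_mult[OF pm_refl pCons.IH])
  qed
  moreover have "pm p ((pCons a f) ^ p) ([:a ^ p:] + monom 1 p * f ^ p)"
  proof -
    have "pm p (([:a:] + [:0, 1:] * f) ^ p) ([:a:] ^ p + ([:0, 1:] * f) ^ p)"
      by (rule freshman_pm[OF p])
    moreover have "[:a:] ^ p + ([:0, 1:] * f) ^ p = [:a ^ p:] + monom 1 p * f ^ p"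
    proof -
      have "([:0, 1:] * f) ^ p = [:0, 1:] ^ p * f ^ p" by (rule power_mult_distrib)
      moreover have "monom 1 p = ([:0, 1:] ^ p :: int poly)" by (simp add: monom_altdef)
      ultimately show ?thesis by (simp only: poly_const_pow)
    qed
    ultimately show ?thesis by (simp only: X[symmetric])
  qed
  ultimately show ?case by (metis pm_trans pm_sym)
qed

lemma pm_cancel:
  assumes p: "prime p" and f: "lead_coeff f = 1" and h: "pm p (f * X) (f * Y)"
  shows "pm p X Y"
proof -
  have "prime (int p)" using p by simp
  then have "prime_elem (int p)" by (rule prime_imp_prime_elem)
  then have pe: "prime_elem [:int p:]" by (rule lift_prime_elem_poly)
  have "[:int p:] dvd f * (X - Y)" using h by (simp add: pm_def algebra_simps)
  then have "[:int p:] dvd f \<or> [:int p:] dvd (X - Y)" using pe by (simp add: prime_elem_dvd_mult_iff)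
  moreover have "\<not> [:int p:] dvd f"
  proof
    assume "[:int p:] dvd f"
    then have "int p dvd coeff f (degree f)" by (simp add: const_poly_dvd_iff)
    then have "int p dvd 1" using f by simp
    then show False using p by (simp add: prime_gt_1_nat)
  qed
  ultimately show ?thesis by (simp add: pm_def)
qed


definition rel :: "nat \<Rightarrow> nat \<Rightarrow> nat \<Rightarrow> bool" where
  "rel p a b \<longleftrightarrow> (\<exists>k t. pm p (cyclotomic a ^ k) (cyclotomic b * t))"

lemma rel_refl: "rel p a a"
  unfolding rel_def by (rule exI[of _ 1], rule exI[of _ 1]) (simp add: pm_refl)

lemma rel_trans:
  assumes "rel p a b" "rel p b c"
  shows "rel p a c"
proof -
  obtain k t where kt: "pm p (cyclotomic a ^ k) (cyclotomic b * t)" using assms(1) by (auto simp: rel_def)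
  obtain l s where ls: "pm p (cyclotomic b ^ l) (cyclotomic c * s)" using assms(2) by (auto simp: rel_def)
  have "pm p ((cyclotomic a ^ k) ^ l) ((cyclotomic b * t) ^ l)" by (rule pm_power[OF kt])
  moreover have "(cyclotomic b * t) ^ l = cyclotomic b ^ l * t ^ l" by (simp add: power_mult_distrib)
  moreover have "pm p (cyclotomic b ^ l * t ^ l) (cyclotomic c * s * t ^ l)"
    by (rule pm_mult[OF ls pm_refl])
  ultimately have "pm p (cyclotomic a ^ (k * l)) (cyclotomic c * (s * t ^ l))"
    by (metis pm_trans power_mult mult.assoc)
  then show ?thesis unfolding rel_def by blast
qed

lemma rel_step:
  assumes p: "prime p" and m: "m > 0"
  shows "rel p m (m * p) \<and> rel p (m * p) m"
proof -
  have p1: "p > 1" using p prime_gt_1_nat by blast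
  have lc: "lead_coeff (cyclotomic m) = 1" using cyclotomic_lead[OF m] .
  obtain q where q: "p = Suc (Suc q)" using p1 by (metis less_imp_Suc_add plus_1_eq_Suc add_Suc_right)
  have pw: "cyclotomic m ^ p = cyclotomic m * cyclotomic m ^ (p - 1)" using q by simp
  have F: "pm p (pcompose (cyclotomic m) (monom 1 p)) (cyclotomic m ^ p)" by (rule frobenius[OF p])
  show ?thesis
  proof (cases "p dvd m")
    case True
    note E = cyc_comp_dvd[OF p m True]
    have "pm p (cyclotomic (m * p)) (cyclotomic m ^ p)" using F E by simp
    then have r1: "pm p (cyclotomic m ^ p) (cyclotomic (m * p) * 1)" by (simp add: pm_sym)
    have "pm p (cyclotomic (m * p) ^ 1) (cyclotomic m * cyclotomic m ^ (p - 1))"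
      using \<open>pm p (cyclotomic (m * p)) (cyclotomic m ^ p)\<close> pw by simp
    then show ?thesis using r1 unfolding rel_def by blast
  next
    case False
    note E = cyc_comp_ndvd[OF p m False]
    have G: "pm p (cyclotomic (m * p) * cyclotomic m) (cyclotomic m ^ p)" using F E by simp
    then have r1: "pm p (cyclotomic m ^ p) (cyclotomic (m * p) * cyclotomic m)" by (simp add: pm_sym)
    have "pm p (cyclotomic m * cyclotomic (m * p)) (cyclotomic m * cyclotomic m ^ (p - 1))"
      using G pw by (simp add: mult.commute)
    then have "pm p (cyclotomic (m * p)) (cyclotomic m ^ (p - 1))" by (rule pm_cancel[OF p lc])
    moreover have "cyclotomic m ^ (p - 1) = cyclotomic m * cyclotomic m ^ (p - 2)" using q by simp
    ultimately have "pm p (cyclotomic (m * p) ^ 1) (cyclotomic m * cyclotomic m ^ (p - 2))" by simp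
    then show ?thesis using r1 unfolding rel_def by blast
  qed
qed

lemma rel_pow:
  assumes p: "prime p" and m: "m > 0"
  shows "rel p m (m * p ^ k) \<and> rel p (m * p ^ k) m"
proof (induction k)
  case 0
  then show ?case by (simp add: rel_refl)
next
  case (Suc k)
  have "m * p ^ k > 0" using m p prime_gt_0_nat by simp
  from rel_step[OF p this] have "rel p (m * p ^ k) (m * p ^ Suc k) \<and> rel p (m * p ^ Suc k) (m * p ^ k)"
    by (simp add: mult_ac)
  then show ?case using Suc rel_trans by blast
qed

lemma rel_eq:
  assumes "rel p a b"
  shows "\<exists>k t w. cyclotomic a ^ k = cyclotomic b * t + smult (int p) w"
proof -
  obtain k t where "pm p (cyclotomic a ^ k) (cyclotomic b * t)" using assms by (auto simp: rel_def)
  then obtain w where "cyclotomic a ^ k - cyclotomic b * t = [:int p:] * w" by (auto simp: pm_def elim: dvdE)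
  then have "cyclotomic a ^ k = cyclotomic b * t + smult (int p) w" by (simp add: algebra_simps)
  then show ?thesis by blast
qed


definition vanish :: "(int poly \<Rightarrow> 'a::comm_ring_1 poly) \<Rightarrow> nat set \<Rightarrow> bool" where
  "vanish c T \<longleftrightarrow> (\<forall>f\<in>Phi_star T. to_R f dvd c f)"

lemma binom_split:
  fixes u v :: "'a::comm_ring_1"
  shows "\<exists>A B. (u + v) ^ (i + l) = u ^ i * A + v ^ l * B"
proof (induction "i + l" arbitrary: i l)
  case 0
  then show ?case by (intro exI[of _ 1] exI[of _ 0]) simp
next
  case (Suc n)
  show ?case
  proof (cases "i = 0")
    case True
    then show ?thesis by (intro exI[of _ "(u + v) ^ l"] exI[of _ 0]) simp
  next
    case i0: False
    show ?thesis
    proof (cases "l = 0")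
      case True
      then show ?thesis by (intro exI[of _ 0] exI[of _ "(u + v) ^ i"]) simp
    next
      case l0: False
      obtain i' where i': "i = Suc i'" using i0 by (cases i) auto
      obtain l' where l': "l = Suc l'" using l0 by (cases l) auto
      obtain A1 B1 where 1: "(u + v) ^ (i' + l) = u ^ i' * A1 + v ^ l * B1"
        using Suc(1)[of i' l] Suc(2) i' by auto
      obtain A2 B2 where 2: "(u + v) ^ (i + l') = u ^ i * A2 + v ^ l' * B2"
        using Suc(1)[of i l'] Suc(2) l' by auto
      have n1: "n = i' + l" and n2: "n = i + l'" using Suc(2) i' l' by auto
      have "(u + v) ^ (i + l) = (u + v) * (u + v) ^ n"
        using Suc(2) by (metis power_Suc)
      also have "\<dots> = u * (u + v) ^ n + v * (u + v) ^ n" by (simp add: distrib_right)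
      also have "\<dots> = u * (u ^ i' * A1 + v ^ l * B1) + v * (u ^ i * A2 + v ^ l' * B2)"
        using 1 2 n1 n2 by simp
      also have "\<dots> = u ^ i * (A1 + v * A2) + v ^ l * (u * B1 + B2)"
        using i' l' by (simp add: algebra_simps)
      finally show ?thesis by blast
    qed
  qed
qed

lemma phi_mult: "f \<in> Phi_star T \<Longrightarrow> g \<in> Phi_star T \<Longrightarrow> f * g \<in> Phi_star T"
proof -
  assume "f \<in> Phi_star T" "g \<in> Phi_star T"
  then obtain M N where "f = prod_mset (image_mset cyclotomic M)" "set_mset M \<subseteq> T"
    "g = prod_mset (image_mset cyclotomic N)" "set_mset N \<subseteq> T"
    by (auto simp: Phi_star_def)
  then show ?thesis unfolding Phi_star_def by (intro CollectI exI[of _ "M + N"]) auto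
qed

lemma phi_cyc_pow: "n \<in> T \<Longrightarrow> cyclotomic n ^ e \<in> Phi_star T"
  unfolding Phi_star_def by (intro CollectI exI[of _ "replicate_mset e n"]) auto

lemma phi_mono: "T \<subseteq> S \<Longrightarrow> Phi_star T \<subseteq> Phi_star S"
  unfolding Phi_star_def by blast

lemma phi_monic: "0 \<notin> T \<Longrightarrow> f \<in> Phi_star T \<Longrightarrow> lead_coeff f = 1"
proof -
  assume T: "0 \<notin> T" and "f \<in> Phi_star T"
  then obtain M where M: "f = prod_mset (image_mset cyclotomic M)" "set_mset M \<subseteq> T"
    by (auto simp: Phi_star_def)
  have "set_mset M \<subseteq> T \<Longrightarrow> lead_coeff (prod_mset (image_mset cyclotomic M)) = 1"
  proof (induction M)
    case empty
    then show ?case by simp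
  next
    case (add x M)
    then have "x > 0" using T by (auto intro: Nat.gr0I)
    then show ?case using add by (simp add: lead_coeff_mult cyclotomic_lead)
  qed
  then show ?thesis using M by simp
qed

lemma phi_insert:
  assumes "f \<in> Phi_star (insert n T)"
  shows "\<exists>g e. g \<in> Phi_star T \<and> f = g * cyclotomic n ^ e"
proof -
  obtain M where M: "f = prod_mset (image_mset cyclotomic M)" "set_mset M \<subseteq> insert n T"
    using assms by (auto simp: Phi_star_def)
  define M' where "M' = {#x \<in># M. x \<noteq> n#}"
  have split: "M = M' + replicate_mset (count M n) n"
    unfolding M'_def using multiset_partition[where M=M and P="\<lambda>x. x \<noteq> n"] filter_eq_replicate_mset[where D=M and x=n]
    by simp
  have "set_mset M' \<subseteq> T" using M(2) by (auto simp: M'_def)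
  then have "prod_mset (image_mset cyclotomic M') \<in> Phi_star T" unfolding Phi_star_def by blast
  moreover have "f = prod_mset (image_mset cyclotomic M') * cyclotomic n ^ count M n"
    using M(1) by (subst (asm) split) simp
  ultimately show ?thesis by blast
qed

lemma main_step:
  fixes c :: "int poly \<Rightarrow> 'a::comm_ring_1 poly"
  assumes comp: "compatible S c" and TS: "T \<subseteq> S" and nS: "n \<in> S" and S0: "0 \<notin> S"
    and n'T: "n' \<in> T"
    and sep: "p_adically_separated TYPE('a) p"
    and rl: "cyclotomic n' ^ b = cyclotomic n * t + smult (int p) w"
    and van: "vanish c T"
  shows "vanish c (insert n T)"
  unfolding vanish_def
proof
  fix f assume f: "f \<in> Phi_star (insert n T)"
  obtain g e where g: "g \<in> Phi_star T" and fg: "f = g * cyclotomic n ^ e" using phi_insert[OF f] by blast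
  have fS: "f \<in> Phi_star S" using f TS nS phi_mono[of "insert n T" S] by auto
  show "to_R f dvd c f"
  proof (cases "(1::'a) = 0")
    case True
    have "x = 0" for x :: "'a poly"
    proof -
      have "x = smult 1 x" by simp
      also have "\<dots> = 0" using True by simp
      finally show ?thesis .
    qed
    then have "c f = 0" by blast
    then show ?thesis by simp
  next
    case nontriv: False
    have lc: "lead_coeff (to_R f :: 'a poly) = 1" using phi_monic[OF S0 fS] nontriv by (rule to_R_lead)
    have sep': "\<And>x::'a. (\<forall>j. of_nat p ^ j dvd x) \<Longrightarrow> x = 0"
      using sep unfolding p_adically_separated_def by blast
    show ?thesis
    proof (rule monic_dvd_from_sep[OF lc sep'])
      fix j
      obtain A B where AB: "(cyclotomic n * t + smult (int p) w) ^ (e + j) =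
          (cyclotomic n * t) ^ e * A + (smult (int p) w) ^ j * B"
        using binom_split by blast
      define A' where "A' = t ^ e * A"
      define B' where "B' = w ^ j * B"
      define N where "N = b * (e + j)"
      have PN: "cyclotomic n' ^ N = cyclotomic n ^ e * A' + smult (int p ^ j) B'"
      proof -
        have "cyclotomic n' ^ N = (cyclotomic n' ^ b) ^ (e + j)" by (simp add: N_def power_mult)
        also have "\<dots> = (cyclotomic n * t) ^ e * A + (smult (int p) w) ^ j * B" using rl AB by simp
        also have "\<dots> = cyclotomic n ^ e * A' + smult (int p ^ j) B'"
          by (simp add: A'_def B'_def smult_power power_mult_distrib mult_ac)
        finally show ?thesis .
      qed
      define G where "G = g * cyclotomic n' ^ N"
      define F where "F = f * cyclotomic n' ^ N"
      have GT: "G \<in> Phi_star T" unfolding G_def by (rule phi_mult[OF g phi_cyc_pow[OF n'T]])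
      have GS: "G \<in> Phi_star S" using GT TS phi_mono by blast
      have FS: "F \<in> Phi_star S" unfolding F_def using n'T TS by (intro phi_mult[OF fS phi_cyc_pow]) auto
      have "to_R f dvd c F - c f"
        using comp fS FS unfolding compatible_def F_def by simp
      then obtain k where k: "c F - c f = to_R f * k" by (auto elim: dvdE)
      have "G dvd F" unfolding G_def F_def fg by (simp add: mult_ac)
      then have "to_R G dvd c F - c G" using comp GS FS unfolding compatible_def by blast
      moreover have "to_R G dvd c G" using van GT unfolding vanish_def by blast
      ultimately have "to_R G dvd c F" by (metis diff_add_cancel dvd_add)
      then obtain y where y: "c F = to_R G * y" by (auto elim: dvdE)
      have "to_R G = (to_R f :: 'a poly) * to_R A' + to_R g * smult (of_nat p ^ j) (to_R B')"
        unfolding G_def PN fg to_R_mult to_R_add to_R_smult to_R_power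
        by (simp add: algebra_simps)
      then have "c F = to_R f * (to_R A' * y) + smult (of_nat p ^ j) (to_R g * to_R B' * y)"
        using y by (simp add: algebra_simps)
      then have "c f = to_R f * (to_R A' * y - k) + smult (of_nat p ^ j) (to_R g * to_R B' * y)"
        using k by (simp add: algebra_simps)
      then show "\<exists>u z. c f = to_R f * u + smult (of_nat p ^ j) z" by blast
    qed
  qed
qed


lemma trivial_ring_vanish:
  assumes "(UNIV :: 'a::comm_ring_1 set) = {0}"
  shows "vanish (c :: int poly \<Rightarrow> 'a poly) T"
proof -
  have one: "(1::'a) = 0" using assms by (metis UNIV_I singletonD)
  have "x = 0" for x :: "'a poly"
  proof -
    have "x = smult 1 x" by simp
    also have "\<dots> = 0" using one by simp
    finally show ?thesis .
  qed
  then show ?thesis unfolding vanish_def by (metis dvd_0_right)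
qed

lemma chain_step:
  fixes c :: "int poly \<Rightarrow> 'a::comm_ring_1 poly"
  assumes comp: "compatible S c" and TS: "T \<subseteq> S" and S0: "0 \<notin> S"
    and x: "x \<in> T" and y: "y \<in> S" and eq: "equiv_R TYPE('a) x y" and van: "vanish c T"
  shows "vanish c (insert y T)"
proof -
  consider "x = y"
    | "(UNIV :: 'a set) = {0}"
    | p k where "prime p" "p_adically_separated TYPE('a) p" "x = y * p ^ k \<or> y = x * p ^ k"
    using eq unfolding equiv_R_def by blast
  then show ?thesis
  proof cases
    case 1
    then show ?thesis using x van by (simp add: insert_absorb)
  next
    case 2
    then show ?thesis by (rule trivial_ring_vanish)
  next
    case (3 p k)
    have x0: "x > 0" using x TS S0 by (auto intro: Nat.gr0I)
    have y0: "y > 0" using y S0 by (auto intro: Nat.gr0I)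
    have "rel p x y"
      using 3(3) rel_pow[OF 3(1) x0, of k] rel_pow[OF 3(1) y0, of k] by auto
    then obtain b t w where "cyclotomic x ^ b = cyclotomic y * t + smult (int p) w"
      using rel_eq by blast
    then show ?thesis by (rule main_step[OF comp TS y S0 x 3(2) _ van])
  qed
qed

lemma chain_in_tl:
  assumes "chain_in R S (x # y # zs)"
  shows "chain_in R S (y # zs)" "equiv_R R x y"
proof -
  show "equiv_R R x y" using assms unfolding chain_in_def by (metis Suc_less_eq length_Cons nth_Cons_0 nth_Cons_Suc zero_less_Suc)
  show "chain_in R S (y # zs)" using assms unfolding chain_in_def
  proof (intro conjI allI impI)
    fix i assume H: "x # y # zs \<noteq> [] \<and> set (x # y # zs) \<subseteq> S \<and>
        (\<forall>i. Suc i < length (x # y # zs) \<longrightarrow> equiv_R R ((x # y # zs) ! i) ((x # y # zs) ! Suc i))"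
      and i: "Suc i < length (y # zs)"
    then have "equiv_R R ((x # y # zs) ! Suc i) ((x # y # zs) ! Suc (Suc i))" by auto
    then show "equiv_R R ((y # zs) ! i) ((y # zs) ! Suc i)" by simp
  qed auto
qed

lemma chain_vanish:
  fixes c :: "int poly \<Rightarrow> 'a::comm_ring_1 poly"
  assumes "chain_in TYPE('a) S xs" "hd xs \<in> T" "T \<subseteq> S" "0 \<notin> S" "compatible S c" "vanish c T"
  shows "\<exists>T'. T \<subseteq> T' \<and> T' \<subseteq> S \<and> last xs \<in> T' \<and> vanish c T'"
  using assms
proof (induction xs arbitrary: T)
  case Nil
  then show ?case by (simp add: chain_in_def)
next
  case (Cons x xs)
  show ?case
  proof (cases xs)
    case Nil
    then show ?thesis using Cons.prems by auto
  next
    case (Cons y zs)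
    note ch = chain_in_tl[OF Cons.prems(1)[unfolded Cons]]
    have yS: "y \<in> S" using ch(1) by (simp add: chain_in_def)
    have "vanish c (insert y T)"
      by (rule chain_step[OF Cons.prems(5) Cons.prems(3) Cons.prems(4) _ yS ch(2) Cons.prems(6)])
         (use Cons.prems(2) in simp)
    moreover have "insert y T \<subseteq> S" using yS Cons.prems(3) by simp
    ultimately obtain T' where "insert y T \<subseteq> T'" "T' \<subseteq> S" "last xs \<in> T'" "vanish c T'"
      using Cons.IH[of "insert y T"] ch(1) Cons.prems(4,5) \<open>xs = y # zs\<close> by auto
    then show ?thesis using \<open>xs = y # zs\<close> by auto
  qed
qed

lemma part1_vanish:
  fixes c :: "int poly \<Rightarrow> 'a::comm_ring_1 poly"
  assumes S0: "0 \<notin> S" and S'S: "S' \<subseteq> S"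
    and ch: "\<forall>n\<in>S. \<exists>xs. chain_in TYPE('a) S xs \<and> hd xs \<in> S' \<and> last xs = n"
    and comp: "compatible S c" and van: "vanish c S'"
  shows "vanish c S"
proof -
  have fin: "finite A \<Longrightarrow> A \<subseteq> S \<Longrightarrow> \<exists>T. S' \<subseteq> T \<and> T \<subseteq> S \<and> A \<subseteq> T \<and> vanish c T" for A
  proof (induction A rule: finite_induct)
    case empty
    then show ?case using S'S van by blast
  next
    case (insert a A)
    then obtain T where T: "S' \<subseteq> T" "T \<subseteq> S" "A \<subseteq> T" "vanish c T" by auto
    obtain xs where xs: "chain_in TYPE('a) S xs" "hd xs \<in> S'" "last xs = a" using ch insert by auto
    obtain T' where T': "T \<subseteq> T'" "T' \<subseteq> S" "last xs \<in> T'" "vanish c T'"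
      using chain_vanish[OF xs(1) _ T(2) S0 comp T(4)] xs(2) T(1) by blast
    show ?case using T T' xs by (intro exI[of _ T']) auto
  qed
  show ?thesis unfolding vanish_def
  proof
    fix f assume "f \<in> Phi_star S"
    then obtain M where M: "f = prod_mset (image_mset cyclotomic M)" "set_mset M \<subseteq> S"
      by (auto simp: Phi_star_def)
    obtain T where T: "T \<subseteq> S" "set_mset M \<subseteq> T" "vanish c T" using fin[OF _ M(2)] by auto
    have "f \<in> Phi_star T" using M T unfolding Phi_star_def by blast
    then show "to_R f dvd c f" using T(3) unfolding vanish_def by blast
  qed
qed

lemma inj_from_vanish:
  fixes S S' :: "nat set"
  assumes S'S: "S' \<subseteq> S"
    and V: "\<And>c :: int poly \<Rightarrow> 'a::comm_ring_1 poly. compatible S c \<Longrightarrow> vanish c S' \<Longrightarrow> vanish c S"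
  shows "inj_on (rho S S' :: (int poly \<Rightarrow> 'a poly) set \<Rightarrow> _) (cyc_compl S)"
proof (rule inj_onI)
  have mono: "Phi_star S' \<subseteq> Phi_star S" by (rule phi_mono[OF S'S])
  fix X Y :: "(int poly \<Rightarrow> 'a poly) set"
  assume X: "X \<in> cyc_compl S" and Y: "Y \<in> cyc_compl S" and eq: "rho S S' X = rho S S' Y"
  obtain a where a: "compatible S a" "X = {b. compatible S b \<and> same_elt S a b}"
    using X by (auto simp: cyc_compl_def)
  obtain a' where a': "compatible S a'" "Y = {b. compatible S b \<and> same_elt S a' b}"
    using Y by (auto simp: cyc_compl_def)
  have "compatible S' a" using a(1) mono unfolding compatible_def by blast
  moreover have "a \<in> X" using a by (simp add: same_elt_def)
  moreover have "same_elt S' a a" by (simp add: same_elt_def)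
  ultimately have "a \<in> rho S S' X" unfolding rho_def by blast
  then have "a \<in> rho S S' Y" using eq by simp
  then obtain b where b: "b \<in> Y" "same_elt S' b a" unfolding rho_def by blast
  have "same_elt S' a' b" using b(1) a'(2) mono unfolding same_elt_def by blast
  then have S'eq: "same_elt S' a' a" using b(2) unfolding same_elt_def
    by (metis (no_types, lifting) diff_add_cancel add_diff_eq dvd_add)
  define c where "c = (\<lambda>f. a' f - a f)"
  have "compatible S c"
    unfolding compatible_def c_def
  proof (intro ballI impI)
    fix f g assume "f \<in> Phi_star S" "g \<in> Phi_star S" "f dvd g"
    then have "to_R f dvd a' g - a' f" "to_R f dvd a g - a f"
      using a(1) a'(1) unfolding compatible_def by blast+
    then have "to_R f dvd (a' g - a' f) - (a g - a f)" by (rule dvd_diff)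
    then show "to_R f dvd a' g - a g - (a' f - a f)" by (simp add: algebra_simps)
  qed
  moreover have "vanish c S'" using S'eq unfolding vanish_def same_elt_def c_def by blast
  ultimately have "vanish c S" by (rule V)
  then have Seq: "\<And>f. f \<in> Phi_star S \<Longrightarrow> to_R f dvd a' f - a f" unfolding vanish_def c_def by blast
  show "X = Y"
    unfolding a(2) a'(2)
  proof (intro Collect_cong conj_cong refl)
    fix b :: "int poly \<Rightarrow> 'a poly" assume "compatible S b"
    show "same_elt S a b \<longleftrightarrow> same_elt S a' b"
    proof
      assume H: "same_elt S a b"
      show "same_elt S a' b" unfolding same_elt_def
      proof
        fix f assume f: "f \<in> Phi_star S"
        have h2: "to_R f dvd a f - b f" using H f unfolding same_elt_def by blast
        have "to_R f dvd (a' f - a f) + (a f - b f)" by (rule dvd_add[OF Seq[OF f] h2])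
        then show "to_R f dvd a' f - b f" by simp
      qed
    next
      assume H: "same_elt S a' b"
      show "same_elt S a b" unfolding same_elt_def
      proof
        fix f assume f: "f \<in> Phi_star S"
        have h2: "to_R f dvd a' f - b f" using H f unfolding same_elt_def by blast
        have "to_R f dvd (a' f - b f) - (a' f - a f)" by (rule dvd_diff[OF h2 Seq[OF f]])
        then show "to_R f dvd a f - b f" by simp
      qed
    qed
  qed
qed

lemma part1:
  assumes "0 \<notin> S" "S' \<subseteq> S"
    "\<forall>n\<in>S. \<exists>xs. chain_in TYPE('a::comm_ring_1) S xs \<and> hd xs \<in> S' \<and> last xs = n"
  shows "inj_on (rho S S' :: (int poly \<Rightarrow> 'a poly) set \<Rightarrow> _) (cyc_compl S)"
  by (rule inj_from_vanish[OF assms(2)]) (rule part1_vanish[OF assms])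


lemma int_sep:
  assumes p: "prime p"
  shows "p_adically_separated TYPE(int) p"
  unfolding p_adically_separated_def
proof (intro allI impI)
  fix x :: int assume H: "\<forall>j. of_nat p ^ j dvd x"
  show "x = 0"
  proof (rule ccontr)
    assume x0: "x \<noteq> 0"
    define j where "j = nat \<bar>x\<bar>"
    have "int p ^ j dvd x" using H by simp
    then have le: "\<bar>int p ^ j\<bar> \<le> \<bar>x\<bar>" using x0 by (rule dvd_imp_le_int[rotated])
    have "j < 2 ^ j" by (rule less_exp)
    also have "(2::nat) ^ j \<le> p ^ j" using p prime_ge_2_nat by (intro power_mono) auto
    finally have "j < p ^ j" .
    then have "int j < int (p ^ j)" by (simp only: of_nat_less_iff)
    then have "int j < int p ^ j" by simp
    moreover have "int j = \<bar>x\<bar>" by (simp add: j_def)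
    ultimately show False using le by simp
  qed
qed

lemma chain_cons:
  assumes "chain_in R S xs" "c \<in> S" "equiv_R R c (hd xs)"
  shows "chain_in R S (c # xs)"
  unfolding chain_in_def
proof (intro conjI allI impI)
  show "c # xs \<noteq> []" by simp
  show "set (c # xs) \<subseteq> S" using assms by (auto simp: chain_in_def)
  fix i assume i: "Suc i < length (c # xs)"
  show "equiv_R R ((c # xs) ! i) ((c # xs) ! Suc i)"
  proof (cases i)
    case 0
    then show ?thesis using assms by (cases xs) (auto simp: chain_in_def)
  next
    case (Suc i')
    then show ?thesis using assms i by (auto simp: chain_in_def)
  qed
qed

lemma chain_single: "c \<in> S \<Longrightarrow> chain_in R S [c]"
  by (simp add: chain_in_def)

lemma int_equiv:
  assumes "prime p"
  shows "equiv_R TYPE(int) m (m * p)" "equiv_R TYPE(int) (m * p) m"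
proof -
  have s: "p_adically_separated TYPE(int) p" by (rule int_sep[OF assms])
  have e1: "prime p \<and> p_adically_separated TYPE(int) p \<and> (m = m * p * p ^ 1 \<or> m * p = m * p ^ 1)"
    using assms s by simp
  show "equiv_R TYPE(int) m (m * p)" unfolding equiv_R_def using e1 by blast
  have e2: "prime p \<and> p_adically_separated TYPE(int) p \<and> (m * p = m * p ^ 1 \<or> m = m * p * p ^ 1)"
    using assms s by simp
  show "equiv_R TYPE(int) (m * p) m" unfolding equiv_R_def using e2 by blast
qed


definition reachI :: "nat \<Rightarrow> nat \<Rightarrow> bool" where
  "reachI n a \<longleftrightarrow> (\<exists>xs. chain_in TYPE(int) {1..} xs \<and> hd xs = a \<and> last xs = n)"

lemma reach_back:
  assumes "reachI n a'" "a \<ge> 1" "equiv_R TYPE(int) a a'"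
  shows "reachI n a"
proof -
  obtain xs where xs: "chain_in TYPE(int) {1..} xs" "hd xs = a'" "last xs = n"
    using assms(1) unfolding reachI_def by blast
  have ne: "xs \<noteq> []" using xs(1) unfolding chain_in_def by blast
  have "chain_in TYPE(int) {1..} (a # xs)"
    by (rule chain_cons[OF xs(1)]) (use assms(2,3) xs(2) in auto)
  then show ?thesis unfolding reachI_def using ne xs(3) by (intro exI[of _ "a # xs"]) simp
qed

lemma factor_step:
  fixes a :: nat
  assumes "a \<ge> 1" "a \<noteq> 1"
  obtains p m where "prime p" "a = m * p" "m \<ge> 1" "m < a"
proof -
  obtain p where p: "prime p" "p dvd a" using prime_factor_nat[OF assms(2)] by blast
  from p(2) obtain m where m: "a = p * m" by (rule dvdE)
  have m1: "m \<ge> 1" using m assms(1) by (cases m) auto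
  have p1: "p > 1" using p(1) by (rule prime_gt_1_nat)
  have "m < a" using m m1 p1 by simp
  then show ?thesis using that[of p m] p(1) m m1 by (simp add: mult.commute)
qed

lemma reach_down:
  assumes "n \<ge> 1"
  shows "a \<ge> 1 \<Longrightarrow> reachI n a \<Longrightarrow> reachI n 1"
proof (induction a rule: less_induct)
  case (less a)
  show ?case
  proof (cases "a = 1")
    case True then show ?thesis using less.prems by simp
  next
    case False
    obtain p m where pm: "prime p" "a = m * p" "m \<ge> 1" "m < a"
      using factor_step[OF less.prems(1) False] by blast
    have "equiv_R TYPE(int) m a" using int_equiv(1)[OF pm(1), of m] pm(2) by simp
    then have "reachI n m" using reach_back[OF less.prems(2) pm(3)] by blast
    then show ?thesis using less.IH[OF pm(4) pm(3)] by blast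
  qed
qed

lemma reach_up:
  assumes "reachI n 1"
  shows "a \<ge> 1 \<Longrightarrow> reachI n a"
proof (induction a rule: less_induct)
  case (less a)
  show ?case
  proof (cases "a = 1")
    case True then show ?thesis using assms by simp
  next
    case False
    obtain p m where pm: "prime p" "a = m * p" "m \<ge> 1" "m < a"
      using factor_step[OF less.prems(1) False] by blast
    have r: "reachI n m" using less.IH[OF pm(4) pm(3)] .
    have "equiv_R TYPE(int) a m" using int_equiv(2)[OF pm(1), of m] pm(2) by simp
    then show ?thesis using reach_back[OF r less.prems(1)] by blast
  qed
qed

lemma int_reach:
  assumes n: "n \<ge> 1" and s: "s \<ge> 1"
  shows "\<exists>xs. chain_in TYPE(int) {1..} xs \<and> hd xs = s \<and> last xs = n"
proof -
  have "reachI n n" unfolding reachI_def using n by (intro exI[of _ "[n]"]) (simp add: chain_single)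
  then have "reachI n 1" using reach_down[OF n n] by blast
  then have "reachI n s" using reach_up s by blast
  then show ?thesis unfolding reachI_def .
qed


theorem theorem4p2:
  shows "(\<forall>S S'. 0 \<notin> S \<and> S' \<subseteq> S \<and>
            (\<forall>n\<in>S. \<exists>xs. chain_in TYPE('a::comm_ring_1) S xs \<and> hd xs \<in> S' \<and> last xs = n)
          \<longrightarrow> inj_on (rho S S' :: (int poly \<Rightarrow> 'a poly) set \<Rightarrow> _) (cyc_compl S))
       \<and> (\<forall>S S'. 0 \<notin> S \<and> connected_R TYPE('a) S \<and> S' \<subseteq> S \<and> S' \<noteq> {}
          \<longrightarrow> inj_on (rho S S' :: (int poly \<Rightarrow> 'a poly) set \<Rightarrow> _) (cyc_compl S))
       \<and> (\<forall>S'. S' \<subseteq> {1..} \<and> S' \<noteq> {}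
          \<longrightarrow> inj_on (rho {1..} S' :: (int poly \<Rightarrow> int poly) set \<Rightarrow> _) (cyc_compl {1..}))"
proof (intro conjI allI impI)
  fix S S' :: "nat set"
  assume H: "0 \<notin> S \<and> S' \<subseteq> S \<and>
            (\<forall>n\<in>S. \<exists>xs. chain_in TYPE('a::comm_ring_1) S xs \<and> hd xs \<in> S' \<and> last xs = n)"
  then show "inj_on (rho S S' :: (int poly \<Rightarrow> 'a poly) set \<Rightarrow> _) (cyc_compl S)"
    by (intro part1) auto
next
  fix S S' :: "nat set"
  assume H: "0 \<notin> S \<and> connected_R TYPE('a) S \<and> S' \<subseteq> S \<and> S' \<noteq> {}"
  then obtain s where s: "s \<in> S'" by blast
  have "\<forall>n\<in>S. \<exists>xs. chain_in TYPE('a) S xs \<and> hd xs \<in> S' \<and> last xs = n"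
  proof
    fix n assume "n \<in> S"
    then obtain xs where "chain_in TYPE('a) S xs" "hd xs = s" "last xs = n"
      using H s unfolding connected_R_def by blast
    then show "\<exists>xs. chain_in TYPE('a) S xs \<and> hd xs \<in> S' \<and> last xs = n" using s by blast
  qed
  then show "inj_on (rho S S' :: (int poly \<Rightarrow> 'a poly) set \<Rightarrow> _) (cyc_compl S)"
    using H by (intro part1) auto
next
  fix S' :: "nat set"
  assume H: "S' \<subseteq> {1..} \<and> S' \<noteq> {}"
  then obtain s where s: "s \<in> S'" by blast
  have s1: "s \<ge> 1" using s H by auto
  have "\<forall>n\<in>{1..}. \<exists>xs. chain_in TYPE(int) {1..} xs \<and> hd xs \<in> S' \<and> last xs = n"
  proof
    fix n :: nat assume "n \<in> {1..}"
    then obtain xs where "chain_in TYPE(int) {1..} xs" "hd xs = s" "last xs = n"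
      using int_reach[OF _ s1, of n] by auto
    then show "\<exists>xs. chain_in TYPE(int) {1..} xs \<and> hd xs \<in> S' \<and> last xs = n" using s by blast
  qed
  then show "inj_on (rho {1..} S' :: (int poly \<Rightarrow> int poly) set \<Rightarrow> _) (cyc_compl {1..})"
    using H by (intro part1) auto
qed


end
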